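(* Let $\alpha,\beta$ be relatively prime positive integers and let $s\ge2$ be an integer. If $n$ is a positive integer with $n>\beta g_{s-1}g_{s-2}$, then $s(n)\ge s$.
   Context: For positive integers $a_1,a_2$, the $(\alpha,\beta)$-walk $w_k(a_1,a_2)$ is given by $w_1=a_1$, $w_2=a_2$, $w_{k+2}=\alpha w_{k+1}+\beta w_k$ ($k\ge1$). For a positive integer $n$, $s(n;a_1,a_2)$ is the (largest) index $s$ with $w_s(a_1,a_2)=n$ ($-\infty$ if none), and $s(n)=\max_{a_1,a_2\ge1}s(n;a_1,a_2)$. The sequence $g_k$: $g_0=0$, $g_1=1$, $g_2=\alpha$, $g_{k+2}=\alpha g_{k+1}+\beta g_k$ for $k\ge1$. *)

theory Defs
  imports Main "HOL-Library.Extended_Nat"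
begin

text \<open>The (alpha,beta)-walk, indexed from 1: walk al be a1 a2 1 = a1, walk al be a1 a2 2 = a2,
  w_(k+2) = al * w_(k+1) + be * w_k. Index 0 is unused (set to 0).\<close>
fun walk :: "nat \<Rightarrow> nat \<Rightarrow> nat \<Rightarrow> nat \<Rightarrow> nat \<Rightarrow> nat" where
  "walk al be a1 a2 0 = 0"
| "walk al be a1 a2 (Suc 0) = a1"
| "walk al be a1 a2 (Suc (Suc 0)) = a2"
| "walk al be a1 a2 (Suc (Suc (Suc k))) =
     al * walk al be a1 a2 (Suc (Suc k)) + be * walk al be a1 a2 (Suc k)"

fun gseq :: "nat \<Rightarrow> nat \<Rightarrow> nat \<Rightarrow> nat" where
  "gseq al be 0 = 0"
| "gseq al be (Suc 0) = 1"
| "gseq al be (Suc (Suc k)) = al * gseq al be (Suc k) + be * gseq al be k"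

text \<open>s(n;a1,a2): largest index s \<ge> 1 with w_s = n (0 encodes -infinity, as indices are \<ge> 1).\<close>
definition s_idx :: "nat \<Rightarrow> nat \<Rightarrow> nat \<Rightarrow> nat \<Rightarrow> nat \<Rightarrow> enat" where
  "s_idx al be n a1 a2 = Sup {enat k | k. k \<ge> 1 \<and> walk al be a1 a2 k = n}"

definition s_max :: "nat \<Rightarrow> nat \<Rightarrow> nat \<Rightarrow> enat" where
  "s_max al be n = (SUP p \<in> {(a1, a2). a1 \<ge> 1 \<and> a2 \<ge> 1}. s_idx al be n (fst p) (snd p))"

end

theory Submission imports Defs "HOL-Number_Theory.Cong" begin

lemma walk_formula:
  "walk al be a1 a2 (Suc (Suc k)) = a2 * gseq al be (Suc k) + be * a1 * gseq al be k"
proof (induction k rule: less_induct)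
  case (less k)
  show ?case
  proof (cases k)
    case 0 then show ?thesis by simp
  next
    case (Suc j)
    show ?thesis
    proof (cases j)
      case 0 then show ?thesis using Suc by simp
    next
      case (Suc i)
      have h1: "walk al be a1 a2 (Suc (Suc j)) = a2 * gseq al be (Suc j) + be * a1 * gseq al be j"
        by (rule less.IH) (simp add: \<open>k = Suc j\<close>)
      have h2: "walk al be a1 a2 (Suc (Suc i)) = a2 * gseq al be (Suc i) + be * a1 * gseq al be i"
        by (rule less.IH) (simp add: \<open>k = Suc j\<close> Suc)
      have "walk al be a1 a2 (Suc (Suc k)) = al * walk al be a1 a2 (Suc (Suc j)) + be * walk al be a1 a2 (Suc (Suc i))"
        unfolding \<open>k = Suc j\<close> Suc by (simp only: walk.simps(4))
      also have "\<dots> = al * (a2 * gseq al be (Suc j) + be * a1 * gseq al be j) + be * (a2 * gseq al be (Suc i) + be * a1 * gseq al be i)"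
        by (simp only: h1 h2)
      also have "\<dots> = a2 * gseq al be (Suc k) + be * a1 * gseq al be k"
        using Suc \<open>k = Suc j\<close> by (simp add: algebra_simps)
      finally show ?thesis .
    qed
  qed
qed

lemma gseq_pos: assumes "al \<ge> 1" shows "gseq al be (Suc m) \<ge> 1"
proof (induction m rule: less_induct)
  case (less m)
  then show ?case using assms
    by (cases m) (auto simp: trans_le_add1)
qed

lemma gseq_coprime:
  assumes "coprime al be"
  shows "coprime (gseq al be (Suc k)) be \<and> coprime (gseq al be (Suc k)) (gseq al be k)"
proof (induction k)
  case 0 then show ?case by simp
next
  case (Suc k)
  have "coprime be (al * gseq al be (Suc k))" using Suc assms by (simp add: coprime_commute)
  then have "gcd be (gseq al be k * be + al * gseq al be (Suc k)) = 1"
    by (simp only: gcd_add_mult coprime_iff_gcd_eq_1)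
  then have c1: "coprime (gseq al be (Suc (Suc k))) be"
    by (simp add: coprime_iff_gcd_eq_1 gcd.commute algebra_simps)
  have "coprime (gseq al be (Suc (Suc k))) (gseq al be (Suc k))"
  proof -
    have "coprime (be * gseq al be k) (gseq al be (Suc k))" using Suc
      by (simp add: coprime_commute)
    hence "gcd (gseq al be (Suc k)) (al * gseq al be (Suc k) + be * gseq al be k) = 1"
      by (simp only: gcd_add_mult coprime_iff_gcd_eq_1 gcd.commute)
    hence "coprime (al * gseq al be (Suc k) + be * gseq al be k) (gseq al be (Suc k))"
      by (simp add: coprime_iff_gcd_eq_1 gcd.commute)
    thus ?thesis by simp
  qed
  with c1 show ?case by simp
qed

lemma frob:
  fixes x y n :: nat
  assumes "x \<ge> 1" "y \<ge> 1" "coprime x y" "n > x * y"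
  shows "\<exists>a b. a \<ge> 1 \<and> b \<ge> 1 \<and> n = a * x + b * y"
proof -
  obtain u where u: "[x * u = 1] (mod y)" using cong_solve_coprime_nat[OF assms(3)] by auto
  define a0 where "a0 = (n * u) mod y"
  define a where "a = (if a0 = 0 then y else a0)"
  have a1: "a \<ge> 1" "a \<le> y" using assms(2) unfolding a_def a0_def
    by (auto simp: less_imp_le)
  have "[a = n * u] (mod y)" unfolding a_def a0_def
    by (auto simp: cong_def)
  hence "[x * a = x * (n * u)] (mod y)" by (simp add: cong_scalar_left)
  moreover have "[x * (n * u) = n] (mod y)"
    using cong_scalar_right[OF u, of n] by (simp add: algebra_simps)
  ultimately have c: "[x * a = n] (mod y)" using cong_trans by blast
  have le: "x * a \<le> x * y" using a1 by simp
  hence le2: "x * a < n" using assms(4) by linarith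
  have "y dvd (n - x * a)" using c le2
    using cong_altdef_nat[of "x * a" n y] cong_sym by (metis less_imp_le)
  then obtain b where b: "n - x * a = y * b" by blast
  have "b \<ge> 1" using b le2 by (cases b) auto
  show ?thesis using b le2 a1 \<open>b \<ge> 1\<close>
    by (intro exI[of _ a] exI[of _ b]) (auto simp: algebra_simps)
qed

theorem lemma3p3:
  fixes al be s n :: nat
  assumes "al \<ge> 1" and "be \<ge> 1" and "coprime al be"
    and "s \<ge> 2" and "n \<ge> 1"
    and "n > be * gseq al be (s - 1) * gseq al be (s - 2)"
  shows "s_max al be n \<ge> enat s"
proof -
  obtain k where k: "s = Suc (Suc k)" using assms(4) by (metis add_2_eq_Suc le_Suc_ex)
  have "\<exists>a1 a2. a1 \<ge> 1 \<and> a2 \<ge> 1 \<and> walk al be a1 a2 s = n"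
  proof (cases k)
    case 0
    then show ?thesis using k assms(5) by auto
  next
    case (Suc j)
    have gpos: "gseq al be m \<ge> 1" if "m \<ge> 1" for m
      using gseq_pos[OF assms(1), of be "m - 1"] that by simp
    let ?x = "gseq al be (Suc k)" and ?y = "be * gseq al be k"
    have cop: "coprime ?x ?y" using gseq_coprime[OF assms(3), of k] by simp
    have x1: "?x \<ge> 1" using gpos by simp
    have y1: "?y \<ge> 1" using gpos[of k] Suc assms(2) by simp
    have "n > ?x * ?y" using assms(6) k by (simp add: algebra_simps)
    from frob[OF x1 y1 cop this] obtain a b where ab: "a \<ge> 1" "b \<ge> 1" "n = a * ?x + b * ?y" by blast
    show ?thesis using walk_formula[of al be b a k] ab k
      by (intro exI[of _ b] exI[of _ a]) (simp add: algebra_simps)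
  qed
  then obtain a1 a2 where aa: "a1 \<ge> 1" "a2 \<ge> 1" "walk al be a1 a2 s = n" by blast
  have "enat s \<le> s_idx al be n a1 a2" unfolding s_idx_def
    using aa assms(4) by (intro Sup_upper) auto
  also have "\<dots> \<le> s_max al be n" unfolding s_max_def
    using aa by (intro SUP_upper2[of "(a1,a2)"]) auto
  finally show ?thesis .
qed

end
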